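(* Let $d\ge2$, let $K$ be a number field, let $\mathbf A,\mathbf B\in K[t]$ be nonzero coprime polynomials and $\mathbf c=\mathbf A/\mathbf B$. Let $v\in\Omega_{\mathbb Q}$ be a non-archimedean place such that (i) every coefficient of $\mathbf A$ and of $\mathbf B$ is a $v$-adic integer; (ii) the resultant of $\mathbf A$ and $\mathbf B$ and the leading coefficients of $\mathbf A$ and of $\mathbf B$ are $v$-adic units; (iii) if the constant coefficient $a_0$ of $\mathbf A$ is nonzero, then $a_0$ is a $v$-adic unit. Then for each $\lambda\in\overline{\mathbb Q}^*$, $$\frac{\log M_{\mathbf c,n,v}(\lambda)}{d^n}=\frac{\log M_{\mathbf c,1,v}(\lambda)}{d}\quad\text{for all }n\ge1.$$
   Context: For each $v\in\Omega_{\mathbb Q}$ a fixed extension of $|\cdot|_v$ to $\overline{\mathbb Q}$ is used; $x$ is a $v$-adic integer if $|x|_v\le1$ and a $v$-adic unit if $|x|_v=1$. The polynomials $\mathbf A_{\mathbf c,n},\mathbf B_{\mathbf c,n}$ are defined by: $\mathbf A_{\mathbf c,0}=\mathbf A$, $\mathbf B_{\mathbf c,0}=\mathbf B$; if $\mathbf A(0)\neq0$ then $\mathbf A_{\mathbf c,1}=\mathbf A^d+t\mathbf B^d$, $\mathbf B_{\mathbf c,1}=\mathbf A\mathbf B^{d-1}$, while if $\mathbf A(0)=0$ then $\mathbf A_{\mathbf c,1}=(\mathbf A^d+t\mathbf B^d)/t$, $\mathbf B_{\mathbf c,1}=\mathbf A\mathbf B^{d-1}/t$; for $n\ge1$, $\mathbf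 A_{\mathbf c,n+1}=\mathbf A_{\mathbf c,n}^d+t\mathbf B_{\mathbf c,n}^d$, $\mathbf B_{\mathbf c,n+1}=\mathbf A_{\mathbf c,n}\mathbf B_{\mathbf c,n}^{d-1}$. Finally $M_{\mathbf c,n,v}(\lambda)=\max\{|\mathbf A_{\mathbf c,n}(\lambda)|_v,|\mathbf B_{\mathbf c,n}(\lambda)|_v\}$. *)

theory Defs
  imports "Subresultants.Resultant_Prelim" "HOL-Computational_Algebra.Computational_Algebra"
begin

text \<open>Algebraic closure of Q modelled as the algebraic complex numbers.\<close>

definition number_field :: "complex set \<Rightarrow> bool" where
  "number_field K \<longleftrightarrow>
     0 \<in> K \<and> 1 \<in> K \<and>
     (\<forall>x\<in>K. \<forall>y\<in>K. x + y \<in> K \<and> x * y \<in> K \<and> - x \<in> K) \<and>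
     (\<forall>x\<in>K. x \<noteq> 0 \<longrightarrow> inverse x \<in> K) \<and>
     (\<exists>bs :: complex list. \<forall>x\<in>K. \<exists>qs :: rat list. length qs = length bs \<and>
         x = (\<Sum>i<length bs. of_rat (qs ! i) * bs ! i))"

definition padic_abs :: "nat \<Rightarrow> rat \<Rightarrow> real" where
  "padic_abs p q = (if q = 0 then 0 else
     (let (a, b) = quotient_of q in
       real p powr (- (real (multiplicity (int p) a) - real (multiplicity (int p) b)))))"

definition padic_abs_ext :: "nat \<Rightarrow> (complex \<Rightarrow> real) \<Rightarrow> bool" where
  "padic_abs_ext p f \<longleftrightarrow>
     (\<forall>x. algebraic x \<longrightarrow> f x \<ge> 0 \<and> (f x = 0 \<longleftrightarrow> x = 0)) \<and>
     (\<forall>x y. algebraic x \<longrightarrow> algebraic y \<longrightarrow> f (x * y) = f x * f y) \<and>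
     (\<forall>x y. algebraic x \<longrightarrow> algebraic y \<longrightarrow> f (x + y) \<le> f x + f y) \<and>
     (\<forall>q. f (of_rat q) = padic_abs p q)"

definition v_integer :: "(complex \<Rightarrow> real) \<Rightarrow> complex \<Rightarrow> bool" where
  "v_integer f x \<longleftrightarrow> f x \<le> 1"

definition v_unit :: "(complex \<Rightarrow> real) \<Rightarrow> complex \<Rightarrow> bool" where
  "v_unit f x \<longleftrightarrow> f x = 1"

fun AB_seq :: "nat \<Rightarrow> complex poly \<Rightarrow> complex poly \<Rightarrow> nat \<Rightarrow> complex poly \<times> complex poly" where
  "AB_seq d A B 0 = (A, B)"
| "AB_seq d A B (Suc 0) =
     (if poly A 0 \<noteq> 0 then (A ^ d + [:0, 1:] * B ^ d, A * B ^ (d - 1))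
      else ((A ^ d + [:0, 1:] * B ^ d) div [:0, 1:], (A * B ^ (d - 1)) div [:0, 1:]))"
| "AB_seq d A B (Suc (Suc n)) =
     (let (An, Bn) = AB_seq d A B (Suc n) in (An ^ d + [:0, 1:] * Bn ^ d, An * Bn ^ (d - 1)))"

definition M_cnv :: "nat \<Rightarrow> complex poly \<Rightarrow> complex poly \<Rightarrow> nat \<Rightarrow> (complex \<Rightarrow> real) \<Rightarrow> complex \<Rightarrow> real" where
  "M_cnv d A B n f z = max (f (poly (fst (AB_seq d A B n)) z)) (f (poly (snd (AB_seq d A B n)) z))"

end

theory Submission
  imports Defs
begin


interpretation qvs: vector_space "\<lambda>(r::rat) (z::complex). of_rat r * z"
  by unfold_locales (simp_all add: algebra_simps of_rat_add of_rat_mult)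

lemma qspan_scale: "u \<in> qvs.span S \<Longrightarrow> c \<in> \<rat> \<Longrightarrow> c * u \<in> qvs.span S"
  by (metis Rats_cases qvs.span_scale)

lemma qspan_mult1:
  assumes "w \<in> qvs.span W"
  shows "a * w \<in> qvs.span {a * b | b. b \<in> W}"
  using assms
proof (induct rule: qvs.span_induct_alt)
  case base then show ?case by (simp add: qvs.span_zero)
next
  case (step c x y)
  have "a * (of_rat c * x + y) = of_rat c * (a * x) + a * y" by (simp add: algebra_simps)
  moreover have "a * x \<in> qvs.span {a * b | b. b \<in> W}" using step(1) by (intro qvs.span_base) blast
  ultimately show ?case using step(2) qvs.span_add qvs.span_scale by simp
qed

lemma qspan_mult:
  assumes "u \<in> qvs.span U" "w \<in> qvs.span W"
  shows "u * w \<in> qvs.span {a * b | a b. a \<in> U \<and> b \<in> W}"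
  using assms(1)
proof (induct rule: qvs.span_induct_alt)
  case base then show ?case by (simp add: qvs.span_zero)
next
  case (step c x y)
  have "(of_rat c * x + y) * w = of_rat c * (x * w) + y * w" by (simp add: algebra_simps)
  moreover have "x * w \<in> qvs.span {a * b | a b. a \<in> U \<and> b \<in> W}"
  proof -
    have "x * w \<in> qvs.span {x * b | b. b \<in> W}" by (rule qspan_mult1[OF assms(2)])
    moreover have "{x * b | b. b \<in> W} \<subseteq> {a * b | a b. a \<in> U \<and> b \<in> W}" using step(1) by auto
    ultimately show ?thesis using qvs.span_mono by blast
  qed
  ultimately show ?case using step(2) qvs.span_add qvs.span_scale by simp
qed

lemma alg_from_span:
  assumes T: "finite T" and pw: "\<And>k. (z::complex) ^ k \<in> qvs.span T"
  shows "algebraic z"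
proof (cases "inj_on (\<lambda>k. z ^ k) {..card T}")
  case True
  define S where "S = (\<lambda>k. z ^ k) ` {..card T}"
  have cS: "card S = Suc (card T)" unfolding S_def using card_image[OF True] by simp
  have fS: "finite S" unfolding S_def by simp
  have "qvs.dependent S"
  proof (rule ccontr)
    assume "\<not> qvs.dependent S"
    then have "card S \<le> card T" using qvs.independent_span_bound[OF T, of S] pw unfolding S_def by auto
    then show False using cS by simp
  qed
  then obtain u where u: "\<exists>v\<in>S. u v \<noteq> 0" "(\<Sum>v\<in>S. of_rat (u v) * v) = 0"
    using qvs.dependent_finite[OF fS] by auto
  define p where "p = (\<Sum>k\<le>card T. monom (of_rat (u (z ^ k)) :: complex) k)"
  have cp: "coeff p i = (if i \<le> card T then of_rat (u (z ^ i)) else 0)" for i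
    unfolding p_def by (simp add: coeff_sum)
  have "(\<Sum>v\<in>S. of_rat (u v) * v) = (\<Sum>k\<le>card T. of_rat (u (z ^ k)) * z ^ k)"
    unfolding S_def by (subst sum.reindex[OF True]) simp
  moreover have "poly p z = (\<Sum>k\<le>card T. of_rat (u (z ^ k)) * z ^ k)"
    unfolding p_def by (simp add: poly_sum poly_monom)
  ultimately have pz: "poly p z = 0" using u(2) by simp
  from u(1) obtain k where k: "k \<le> card T" "u (z ^ k) \<noteq> 0" unfolding S_def by auto
  have "p \<noteq> 0" using cp[of k] k by (metis coeff_0 of_rat_eq_0_iff)
  moreover have "coeff p i \<in> \<rat>" for i using cp[of i] by auto
  ultimately show ?thesis using pz by (intro algebraicI') auto
next
  case False
  then obtain i j where ij: "i \<le> card T" "j \<le> card T" "i \<noteq> j" "z ^ i = z ^ j"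
    unfolding inj_on_def by auto
  define p where "p = (monom 1 i - monom 1 j :: complex poly)"
  have "coeff p i = 1" using ij(3) unfolding p_def by (simp add: coeff_monom)
  then have "p \<noteq> 0" by auto
  moreover have "coeff p k \<in> \<int>" for k unfolding p_def by (simp add: coeff_monom)
  moreover have "poly p z = 0" unfolding p_def using ij(4) by (simp add: poly_monom)
  ultimately show ?thesis by (intro algebraicI) auto
qed

lemma alg_powers_span:
  assumes "algebraic (x::complex)"
  shows "\<exists>X. finite X \<and> (\<forall>k. x ^ k \<in> qvs.span X)"
proof -
  obtain p :: "complex poly" where p: "\<And>i. coeff p i \<in> \<rat>" "p \<noteq> 0" "poly p x = 0"
    using assms unfolding algebraic_altdef by blast
  define m where "m = degree p"
  define c where "c = lead_coeff p"
  have c0: "c \<noteq> 0" using p(2) unfolding c_def by simp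
  define X where "X = (\<lambda>i. x ^ i) ` {..<m}"
  have m0: "m > 0"
  proof (rule ccontr)
    assume "\<not> m > 0"
    then have "degree p = 0" unfolding m_def by simp
    then have "p = [:coeff p 0:]" by (metis degree_0_id)
    then show False using p by (metis pCons_0_0 poly_const_conv)
  qed
  have "0 = (\<Sum>i\<le>m. coeff p i * x ^ i)" using p(3) unfolding m_def by (simp add: poly_altdef)
  also have "\<dots> = (\<Sum>i<m. coeff p i * x ^ i) + c * x ^ m"
    unfolding c_def m_def by (simp add: lessThan_Suc_atMost[symmetric])
  finally have eq: "c * x ^ m = - (\<Sum>i<m. coeff p i * x ^ i)"
    by (metis add.commute add_eq_0_iff)
  have "x ^ m = (c * x ^ m) / c" using c0 by simp
  also have "\<dots> = (\<Sum>i<m. - (coeff p i * x ^ i) / c)"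
    unfolding eq by (simp add: sum_divide_distrib sum_negf)
  also have "\<dots> = (\<Sum>i<m. (- coeff p i / c) * x ^ i)"
    by (rule sum.cong) auto
  finally have "x ^ m = (\<Sum>i<m. (- coeff p i / c) * x ^ i)" .
  moreover have "(\<Sum>i<m. (- coeff p i / c) * x ^ i) \<in> qvs.span X"
  proof (rule qvs.span_sum)
    fix i assume "i \<in> {..<m}"
    then have "x ^ i \<in> qvs.span X" unfolding X_def by (intro qvs.span_base) auto
    moreover have "- coeff p i / c \<in> \<rat>" by (intro Rats_divide) (auto simp: c_def p(1))
    ultimately show "(- coeff p i / c) * x ^ i \<in> qvs.span X" by (rule qspan_scale)
  qed
  ultimately have xm: "x ^ m \<in> qvs.span X" by simp
  have xv: "x * v \<in> qvs.span X" if "v \<in> X" for v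
  proof -
    from that obtain i where i: "i < m" "v = x ^ i" unfolding X_def by auto
    show ?thesis
    proof (cases "Suc i < m")
      case True
      then have "x ^ Suc i \<in> X" unfolding X_def by (intro image_eqI[of _ _ "Suc i"]) auto
      then show ?thesis using i qvs.span_base by simp
    next
      case False then have "Suc i = m" using i by simp
      then show ?thesis using xm i by (metis power_Suc)
    qed
  qed
  have xu: "x * u \<in> qvs.span X" if "u \<in> qvs.span X" for u
    using that
  proof (induct rule: qvs.span_induct_alt)
    case base then show ?case by (simp add: qvs.span_zero)
  next
    case (step c z y)
    have "x * (of_rat c * z + y) = of_rat c * (x * z) + x * y" by (simp add: algebra_simps)
    then show ?case using step xv qvs.span_add qvs.span_scale by simp
  qed
  have "x ^ k \<in> qvs.span X" for k
  proof (induct k)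
    case 0 then show ?case using m0 unfolding X_def by (intro qvs.span_base) force
  next
    case (Suc k) then show ?case using xu by simp
  qed
  moreover have "finite X" unfolding X_def by simp
  ultimately show ?thesis by blast
qed

lemma algebraic_add_mult:
  assumes "algebraic (x::complex)" "algebraic y"
  shows "algebraic (x + y)" "algebraic (x * y)"
proof -
  obtain X where X: "finite X" "\<And>k. x ^ k \<in> qvs.span X" using alg_powers_span[OF assms(1)] by blast
  obtain Y where Y: "finite Y" "\<And>k. y ^ k \<in> qvs.span Y" using alg_powers_span[OF assms(2)] by blast
  define T where "T = {a * b | a b. a \<in> X \<and> b \<in> Y}"
  have "T = (\<lambda>(a,b). a * b) ` (X \<times> Y)" unfolding T_def by auto
  then have fT: "finite T" using X(1) Y(1) by simp
  have xy: "x ^ i * y ^ j \<in> qvs.span T" for i j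
    unfolding T_def by (rule qspan_mult[OF X(2) Y(2)])
  show "algebraic (x * y)"
  proof (rule alg_from_span[OF fT])
    fix k
    have "(x * y) ^ k = x ^ k * y ^ k" by (simp add: power_mult_distrib)
    then show "(x * y) ^ k \<in> qvs.span T" using xy by simp
  qed
  show "algebraic (x + y)"
  proof (rule alg_from_span[OF fT])
    fix k
    have bin: "(x + y) ^ k = (\<Sum>i\<le>k. of_nat (k choose i) * x ^ i * y ^ (k - i))"
      by (rule binomial_ring)
    show "(x + y) ^ k \<in> qvs.span T"
      unfolding bin
    proof (rule qvs.span_sum)
      fix i assume "i \<in> {..k}"
      have "of_nat (k choose i) * (x ^ i * y ^ (k - i)) \<in> qvs.span T"
        by (rule qspan_scale[OF xy]) simp
      then show "of_nat (k choose i) * x ^ i * y ^ (k - i) \<in> qvs.span T" by (simp add: mult.assoc)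
    qed
  qed
qed

lemma algebraic_uminus: "algebraic (x::complex) \<Longrightarrow> algebraic (- x)"
  using algebraic_add_mult(2)[of "-1" x] by simp

lemma algebraic_diff: "algebraic (x::complex) \<Longrightarrow> algebraic y \<Longrightarrow> algebraic (x - y)"
  using algebraic_add_mult(1)[of x "-y"] algebraic_uminus by simp

lemma algebraic_power: "algebraic (x::complex) \<Longrightarrow> algebraic (x ^ n)"
  by (induct n) (auto intro: algebraic_add_mult)

lemma algebraic_sum: "(\<And>i. i \<in> S \<Longrightarrow> algebraic (g i :: complex)) \<Longrightarrow> algebraic (sum g S)"
  by (induct S rule: infinite_finite_induct) (auto intro: algebraic_add_mult)

lemma algebraic_prod: "(\<And>i. i \<in> S \<Longrightarrow> algebraic (g i :: complex)) \<Longrightarrow> algebraic (prod g S)"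
  by (induct S rule: infinite_finite_induct) (auto intro: algebraic_add_mult)

lemma algebraic_poly:
  assumes "\<And>i. algebraic (coeff P i)" "algebraic (z::complex)"
  shows "algebraic (poly P z)"
  unfolding poly_altdef
proof (rule algebraic_sum)
  fix i show "algebraic (coeff P i * z ^ i)"
    using assms(1)[of i] algebraic_power[OF assms(2), of i] by (rule algebraic_add_mult(2))
qed

lemma number_field_algebraic:
  assumes K: "number_field K" and x: "x \<in> K"
  shows "algebraic x"
proof -
  have "\<exists>bs :: complex list. \<forall>x\<in>K. \<exists>qs :: rat list. length qs = length bs \<and>
         x = (\<Sum>i<length bs. of_rat (qs ! i) * bs ! i)" using K unfolding number_field_def by (elim conjE)
  then obtain bs :: "complex list" where bs: "\<forall>x\<in>K. \<exists>qs :: rat list. length qs = length bs \<and>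
         x = (\<Sum>i<length bs. of_rat (qs ! i) * bs ! i)" ..
  have H: "\<forall>x\<in>K. \<forall>y\<in>K. x + y \<in> K \<and> x * y \<in> K \<and> - x \<in> K"
    using K unfolding number_field_def by (elim conjE)
  have one: "1 \<in> K"
    using K unfolding number_field_def by (elim conjE)
  have mul: "a * b \<in> K" if "a \<in> K" "b \<in> K" for a b
    using H that by blast
  have pk: "x ^ k \<in> K" for k
  proof (induct k)
    case 0 then show ?case using one by simp
  next
    case (Suc k) then show ?case using mul[OF x Suc] by simp
  qed
  show ?thesis
  proof (rule alg_from_span[of "set bs"])
    fix k
    have "\<exists>qs :: rat list. length qs = length bs \<and> x ^ k = (\<Sum>i<length bs. of_rat (qs ! i) * bs ! i)"
      using bs pk[of k] by (rule bspec)
    then obtain qs :: "rat list" where eq: "x ^ k = (\<Sum>i<length bs. of_rat (qs ! i) * bs ! i)"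
      by blast
    have "(\<Sum>i<length bs. of_rat (qs ! i) * bs ! i) \<in> qvs.span (set bs)"
    proof (rule qvs.span_sum)
      fix i assume "i \<in> {..<length bs}"
      then have "bs ! i \<in> qvs.span (set bs)" by (intro qvs.span_base) simp
      then show "of_rat (qs ! i) * bs ! i \<in> qvs.span (set bs)" by (rule qspan_scale) simp
    qed
    then show "x ^ k \<in> qvs.span (set bs)" using eq by simp
  qed simp
qed




lemma real_pow_bound:
  fixes a b :: real
  assumes a: "0 \<le> a" and b: "0 \<le> b" and h: "\<And>n. a ^ n \<le> (real n + 1) * b ^ n"
  shows "a \<le> b"
proof (rule ccontr)
  assume "\<not> a \<le> b"
  then have ab: "b < a" by simp
  show False
  proof (cases "b = 0")
    case True
    then show False using h[of 1] ab by simp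
  next
    case False
    then have bp: "b > 0" using b by simp
    define r where "r = a / b"
    have r1: "r > 1" unfolding r_def using ab bp by simp
    have rn: "r ^ n \<le> real n + 1" for n
    proof -
      have "r ^ n = a ^ n / b ^ n" unfolding r_def by (simp add: power_divide)
      also have "\<dots> \<le> (real n + 1)" using h[of n] bp by (simp add: divide_le_eq)
      finally show ?thesis .
    qed
    define e where "e = r - 1"
    have e: "e > 0" using r1 unfolding e_def by simp
    obtain n :: nat where n: "real n > 3 / (e * e)" using reals_Archimedean2 by blast
    have n1: "n \<ge> 1"
    proof (rule ccontr)
      assume "\<not> n \<ge> 1" then have "n = 0" by simp
      then show False using n e by simp
    qed
    have "1 + real n * e \<le> r ^ n" using Bernoulli_inequality[of e n] e unfolding e_def by simp
    then have "(1 + real n * e)^2 \<le> (r ^ n)^2" using e by (intro power_mono) auto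
    also have "\<dots> = r ^ (2 * n)" by (simp add: power_mult[symmetric] mult.commute)
    also have "\<dots> \<le> real (2 * n) + 1" by (rule rn)
    finally have A: "(1 + real n * e)^2 \<le> 2 * real n + 1" by simp
    have "real n * (e * e) > 3" using n e by (simp add: divide_less_eq mult.commute)
    moreover have nn: "real n \<ge> 1" using n1 by simp
    ultimately have B: "real n * 3 < real n * (real n * (e * e))"
      by (intro mult_strict_left_mono) auto
    have C: "(1 + real n * e)^2 \<ge> real n * (real n * (e * e))"
      using e by (simp add: power2_eq_square algebra_simps)
    show False using A B C nn by linarith
  qed
qed

locale vabs =
  fixes p :: nat and f :: "complex \<Rightarrow> real"
  assumes p: "prime p" and fext: "padic_abs_ext p f"
begin

lemma f_nonneg: "algebraic x \<Longrightarrow> f x \<ge> 0"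
  using fext unfolding padic_abs_ext_def by blast

lemma f_zero_iff: "algebraic x \<Longrightarrow> f x = 0 \<longleftrightarrow> x = 0"
  using fext unfolding padic_abs_ext_def by blast

lemma f_mult: "algebraic x \<Longrightarrow> algebraic y \<Longrightarrow> f (x * y) = f x * f y"
  using fext unfolding padic_abs_ext_def by blast

lemma f_tri: "algebraic x \<Longrightarrow> algebraic y \<Longrightarrow> f (x + y) \<le> f x + f y"
  using fext unfolding padic_abs_ext_def by blast

lemma f_rat: "f (of_rat q) = padic_abs p q"
  using fext unfolding padic_abs_ext_def by blast

lemma f_0 [simp]: "f 0 = 0"
  using f_zero_iff[of 0] by simp

lemma f_1 [simp]: "f 1 = 1"
proof -
  have "f 1 = f 1 * f 1" using f_mult[of 1 1] by simp
  moreover have "f 1 \<noteq> 0" using f_zero_iff[of 1] by simp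
  ultimately show ?thesis by simp
qed

lemma f_m1 [simp]: "f (-1) = 1"
proof -
  have alg: "algebraic (-1 :: complex)" using algebraic_of_int[of "-1"] by simp
  have "1 = f (-1) * f (-1)" using f_mult[OF alg alg] by simp
  moreover have "f (-1) \<ge> 0" using f_nonneg[OF alg] .
  ultimately show ?thesis by (metis abs_of_nonneg mult_cancel_right1 real_sqrt_abs2 real_sqrt_mult_self)
qed

lemma f_uminus: "algebraic x \<Longrightarrow> f (- x) = f x"
proof -
  assume x: "algebraic x"
  have alg: "algebraic (-1 :: complex)" using algebraic_of_int[of "-1"] by simp
  have "f (- x) = f ((-1) * x)" by simp
  also have "\<dots> = f x" using f_mult[OF alg x] by simp
  finally show ?thesis .
qed

lemma f_pow: "algebraic x \<Longrightarrow> f (x ^ n) = f x ^ n"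
  by (induct n) (auto simp: f_mult algebraic_power)

lemma f_nat: "f (of_nat n) \<le> 1"
proof -
  have "f (of_nat n) = f (of_rat (of_nat n))" by simp
  also have "\<dots> = padic_abs p (of_nat n)" by (rule f_rat)
  also have "\<dots> \<le> 1"
  proof (cases "n = 0")
    case True then show ?thesis by (simp add: padic_abs_def)
  next
    case False
    have q: "quotient_of (of_nat n :: rat) = (int n, 1)"
      using quotient_of_int[of "int n"] by simp
    have p1: "real p \<ge> 1" using p prime_gt_0_nat by (simp add: Suc_leI)
    have "padic_abs p (of_nat n) = real p powr (- (real (multiplicity (int p) (int n)) - real (multiplicity (int p) 1)))"
      using False q by (simp add: padic_abs_def)
    also have "\<dots> \<le> real p powr 0" by (rule powr_mono) (use p1 in auto)
    finally show ?thesis using p1 by simp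
  qed
  finally show ?thesis .
qed

lemma f_sum_tri:
  assumes "\<And>i. i \<in> S \<Longrightarrow> algebraic (g i)"
  shows "f (sum g S) \<le> (\<Sum>i\<in>S. f (g i))"
  using assms
proof (induct S rule: infinite_finite_induct)
  case (insert a S)
  have "f (sum g (insert a S)) = f (g a + sum g S)" using insert by simp
  also have "\<dots> \<le> f (g a) + f (sum g S)"
    using insert by (intro f_tri algebraic_sum) auto
  also have "\<dots> \<le> f (g a) + (\<Sum>i\<in>S. f (g i))" using insert by simp
  finally show ?case using insert by simp
qed auto

lemma f_prod:
  assumes "\<And>i. i \<in> S \<Longrightarrow> algebraic (g i)"
  shows "f (prod g S) = (\<Prod>i\<in>S. f (g i))"
  using assms
proof (induct S rule: infinite_finite_induct)
  case (insert a S)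
  have "f (prod g (insert a S)) = f (g a * prod g S)" using insert by simp
  also have "\<dots> = f (g a) * f (prod g S)"
    using insert by (intro f_mult algebraic_prod) auto
  finally show ?case using insert by simp
qed auto

lemma f_um:
  assumes x: "algebraic x" and y: "algebraic y"
  shows "f (x + y) \<le> max (f x) (f y)"
proof -
  define M where "M = max (f x) (f y)"
  have M0: "M \<ge> 0" unfolding M_def using f_nonneg[OF x] by simp
  have fx: "f x \<le> M" and fy: "f y \<le> M" unfolding M_def by auto
  have xy: "algebraic (x + y)" using x y by (rule algebraic_add_mult)
  show ?thesis unfolding M_def[symmetric]
  proof (rule real_pow_bound[OF f_nonneg[OF xy] M0])
    fix n
    have alg: "algebraic (of_nat (n choose k) * x ^ k * y ^ (n - k))" for k
      using x y by (intro algebraic_add_mult algebraic_power) auto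
    have tb: "f (of_nat (n choose k) * x ^ k * y ^ (n - k)) \<le> M ^ n" if "k \<le> n" for k
    proof -
      have "f (of_nat (n choose k) * x ^ k * y ^ (n - k)) = f (of_nat (n choose k)) * (f x ^ k * f y ^ (n - k))"
        using x y by (simp add: f_mult algebraic_power algebraic_add_mult f_pow mult.assoc)
      also have "\<dots> \<le> 1 * (M ^ k * M ^ (n - k))"
        using f_nonneg[OF x] f_nonneg[OF y] fx fy f_nat[of "n choose k"]
        by (intro mult_mono power_mono) (auto simp: f_nonneg)
      also have "\<dots> = M ^ n" using that by (simp add: power_add[symmetric])
      finally show ?thesis .
    qed
    have "f (x + y) ^ n = f ((x + y) ^ n)" using xy by (simp add: f_pow)
    also have "(x + y) ^ n = (\<Sum>k\<le>n. of_nat (n choose k) * x ^ k * y ^ (n - k))"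
      by (rule binomial_ring)
    also have "f \<dots> \<le> (\<Sum>k\<le>n. f (of_nat (n choose k) * x ^ k * y ^ (n - k)))"
      using alg by (intro f_sum_tri)
    also have "\<dots> \<le> (\<Sum>k\<le>n. M ^ n)" using tb by (intro sum_mono) auto
    also have "\<dots> = (real n + 1) * M ^ n" by simp
    finally show "f (x + y) ^ n \<le> (real n + 1) * M ^ n" .
  qed
qed

lemma f_um_eq:
  assumes x: "algebraic x" and y: "algebraic y" and lt: "f y < f x"
  shows "f (x + y) = f x"
proof -
  have "f (x + y) \<le> f x" using f_um[OF x y] lt by simp
  moreover have "f x \<le> f (x + y)"
  proof -
    have xy: "algebraic (x + y)" using x y by (rule algebraic_add_mult)
    have "f x = f ((x + y) + (- y))" by simp
    also have "\<dots> \<le> max (f (x + y)) (f (- y))" using f_um[OF xy algebraic_uminus[OF y]] .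
    also have "f (- y) = f y" using f_uminus[OF y] .
    finally show ?thesis using lt by auto
  qed
  ultimately show ?thesis by simp
qed

lemma f_sum_um:
  assumes "\<And>i. i \<in> S \<Longrightarrow> algebraic (g i)" "\<And>i. i \<in> S \<Longrightarrow> f (g i) \<le> c" "0 \<le> c"
  shows "f (sum g S) \<le> c"
  using assms
proof (induct S rule: infinite_finite_induct)
  case (insert a S)
  have "f (sum g (insert a S)) = f (g a + sum g S)" using insert by simp
  also have "\<dots> \<le> max (f (g a)) (f (sum g S))"
    using insert by (intro f_um algebraic_sum) auto
  also have "\<dots> \<le> c" using insert by simp
  finally show ?case .
qed auto

end



context vabs begin

definition intpoly :: "complex poly \<Rightarrow> bool" where
  "intpoly P \<longleftrightarrow> (\<forall>i. algebraic (coeff P i) \<and> f (coeff P i) \<le> 1)"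

lemma intpolyD: "intpoly P \<Longrightarrow> algebraic (coeff P i)" "intpoly P \<Longrightarrow> f (coeff P i) \<le> 1"
  unfolding intpoly_def by auto

lemma intpoly_1: "intpoly 1"
  unfolding intpoly_def by (auto simp: coeff_1)

lemma intpoly_x: "intpoly [:0, 1:]"
  unfolding intpoly_def by (auto simp: coeff_pCons split: nat.splits)

lemma intpoly_add:
  assumes "intpoly P" "intpoly Q" shows "intpoly (P + Q)"
  unfolding intpoly_def
proof
  fix i
  have a: "algebraic (coeff P i)" "algebraic (coeff Q i)" using assms by (auto intro: intpolyD)
  have "f (coeff P i + coeff Q i) \<le> max (f (coeff P i)) (f (coeff Q i))" using a by (rule f_um)
  also have "\<dots> \<le> 1" using assms intpolyD by auto
  finally show "algebraic (coeff (P + Q) i) \<and> f (coeff (P + Q) i) \<le> 1"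
    using a algebraic_add_mult by simp
qed

lemma intpoly_mult:
  assumes "intpoly P" "intpoly Q" shows "intpoly (P * Q)"
  unfolding intpoly_def
proof
  fix n
  have alg: "algebraic (coeff P i * coeff Q (n - i))" for i
    using assms by (intro algebraic_add_mult intpolyD)
  have le: "f (coeff P i * coeff Q (n - i)) \<le> 1" for i
  proof -
    have "f (coeff P i * coeff Q (n - i)) = f (coeff P i) * f (coeff Q (n - i))"
      using assms by (intro f_mult intpolyD)
    also have "\<dots> \<le> 1 * 1" using assms
      by (intro mult_mono intpolyD) (auto intro: f_nonneg intpolyD)
    finally show ?thesis by simp
  qed
  show "algebraic (coeff (P * Q) n) \<and> f (coeff (P * Q) n) \<le> 1"
    unfolding coeff_mult using alg le by (auto intro: algebraic_sum f_sum_um)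
qed

lemma intpoly_pow: "intpoly P \<Longrightarrow> intpoly (P ^ n)"
  by (induct n) (auto intro: intpoly_mult intpoly_1)

lemma intpoly_alg: "intpoly P \<Longrightarrow> algebraic z \<Longrightarrow> algebraic (poly P z)"
  by (rule algebraic_poly) (auto intro: intpolyD)

lemma poly_le1:
  assumes P: "intpoly P" and z: "algebraic z" and fz: "f z \<le> 1"
  shows "f (poly P z) \<le> 1"
  unfolding poly_altdef
proof (rule f_sum_um)
  fix i
  show "algebraic (coeff P i * z ^ i)" using P z by (intro algebraic_add_mult algebraic_power intpolyD)
  have "f (coeff P i * z ^ i) = f (coeff P i) * f z ^ i"
    using P z by (simp add: f_mult f_pow intpolyD algebraic_power)
  also have "\<dots> \<le> 1 * 1" using P z fz
    by (intro mult_mono power_le_one intpolyD) (auto intro: f_nonneg zero_le_power)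
  finally show "f (coeff P i * z ^ i) \<le> 1" by simp
qed simp

lemma poly_lead:
  assumes P: "intpoly P" and z: "algebraic z" and fz: "f z > 1" and lc: "f (lead_coeff P) = 1"
  shows "f (poly P z) = f z ^ degree P"
proof (cases "degree P = 0")
  case True
  then have "poly P z = lead_coeff P" by (metis degree_0_id poly_const_conv)
  then show ?thesis using lc True by simp
next
  case False
  define D where "D = degree P"
  have eq: "poly P z = lead_coeff P * z ^ D + (\<Sum>i<D. coeff P i * z ^ i)"
    unfolding poly_altdef D_def by (simp add: lessThan_Suc_atMost[symmetric])
  have a1: "algebraic (lead_coeff P * z ^ D)" using P z by (intro algebraic_add_mult algebraic_power intpolyD)
  have f1: "f (lead_coeff P * z ^ D) = f z ^ D"
    using P z lc by (simp add: f_mult f_pow intpolyD algebraic_power)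
  have l0: "f z \<ge> 0" using fz by simp
  have f2: "f (\<Sum>i<D. coeff P i * z ^ i) \<le> f z ^ (D - 1)"
  proof (rule f_sum_um)
    fix i assume i: "i \<in> {..<D}"
    show "algebraic (coeff P i * z ^ i)" using P z by (intro algebraic_add_mult algebraic_power intpolyD)
    have "f (coeff P i * z ^ i) = f (coeff P i) * f z ^ i"
      using P z by (simp add: f_mult f_pow intpolyD algebraic_power)
    also have "\<dots> \<le> 1 * f z ^ i" using P z
      by (intro mult_mono intpolyD) (auto intro: f_nonneg zero_le_power)
    also have "\<dots> \<le> f z ^ (D - 1)" using i fz by (simp add: power_increasing)
    finally show "f (coeff P i * z ^ i) \<le> f z ^ (D - 1)" .
  qed (use l0 in simp)
  have "f z ^ (D - 1) < f z ^ D" using fz False unfolding D_def by (intro power_strict_increasing) auto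
  then have "f (poly P z) = f (lead_coeff P * z ^ D)" unfolding eq
    using f2 f1 by (intro f_um_eq a1 algebraic_sum algebraic_add_mult algebraic_power intpolyD P z) auto
  then show ?thesis using f1 D_def by simp
qed

lemma intpoly_pCons: "intpoly (pCons a Q) \<Longrightarrow> intpoly Q"
  unfolding intpoly_def by (metis coeff_pCons_Suc)

lemma poly_const:
  assumes P: "intpoly P" and z: "algebraic z" and fz: "f z < 1" and c: "f (coeff P 0) = 1"
  shows "f (poly P z) = 1"
proof -
  obtain a Q where PQ: "P = pCons a Q" by (rule pCons_cases)
  have Q: "intpoly Q" using P PQ intpoly_pCons by simp
  have a: "a = coeff P 0" using PQ by simp
  have aa: "algebraic a" using a P intpolyD by simp
  have zq: "algebraic (z * poly Q z)" using z Q by (intro algebraic_add_mult intpoly_alg)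
  have "f (z * poly Q z) = f z * f (poly Q z)" using z Q by (intro f_mult intpoly_alg)
  also have "\<dots> \<le> f z * 1" using poly_le1[OF Q z] fz z by (intro mult_left_mono f_nonneg) auto
  finally have "f (z * poly Q z) < f a" using fz c a by simp
  then have "f (a + z * poly Q z) = f a" by (rule f_um_eq[OF aa zq])
  moreover have "poly P z = a + z * poly Q z" unfolding PQ by simp
  ultimately show ?thesis using a c by simp
qed

end



lemma poly_sum_lt:
  fixes r :: "complex poly"
  assumes "degree r < N"
  shows "poly r z = (\<Sum>i<N. coeff r i * z ^ i)"
  unfolding poly_altdef
  by (rule sum.mono_neutral_left) (use assms in \<open>auto simp: coeff_eq_0\<close>)

lemma sylv_row:
  fixes A B :: "complex poly" and z :: complex
  assumes k: "k < degree A + degree B"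
  shows "(\<Sum>j<degree A + degree B. sylvester_mat A B $$ (k,j) * z ^ (degree A + degree B - 1 - j)) =
     (if k < degree B then z ^ (degree B - 1 - k) * poly A z
      else z ^ (degree A + degree B - 1 - k) * poly B z)"
proof -
  define m where "m = degree A"
  define n where "n = degree B"
  define N where "N = m + n"
  have k': "k < N" using k unfolding N_def m_def n_def by simp
  define r where "r = (if k < n then monom 1 (n - 1 - k) * A else monom 1 (N - 1 - k) * B)"
  have e: "sylvester_mat A B $$ (k,j) = coeff r (N - Suc j)" if j: "j < N" for j
  proof -
    have "sylvester_mat A B $$ (k,j) =
      (if k < n then coeff (monom 1 (n - k) * A) (m+n-j)
       else coeff (monom 1 (m + n - k) * B) (m+n-j))"
      using sylvester_index_mat2[of k A B j] k' j unfolding m_def n_def N_def by simp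
    also have "\<dots> = coeff r (N - Suc j)"
    proof (cases "k < n")
      case True
      have c1: "(n-k \<le> m+n-j) = (n - 1 - k \<le> N - Suc j)" using True j unfolding N_def by arith
      have c2: "m+n-j-(n-k) = N - Suc j - (n - 1 - k)" using True j unfolding N_def by arith
      show ?thesis using True unfolding r_def by (simp only: if_True coeff_monom_mult c1 c2)
    next
      case False
      have c1: "(m + n - k \<le> m+n-j) = (N - 1 - k \<le> N - Suc j)" using False j k' unfolding N_def by arith
      have c2: "m+n-j-(m+n-k) = N - Suc j - (N - 1 - k)" using False j k' unfolding N_def by arith
      show ?thesis using False unfolding r_def by (simp only: if_False coeff_monom_mult c1 c2)
    qed
    finally show ?thesis .
  qed
  have dr: "degree r < N"
  proof (cases "k < n")
    case True
    have "degree r \<le> degree (monom (1::complex) (n - 1 - k)) + degree A"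
      unfolding r_def using True by (simp add: degree_mult_le)
    also have "\<dots> \<le> (n - 1 - k) + m" unfolding m_def using degree_monom_le by (intro add_mono) auto
    finally show ?thesis using True k' unfolding N_def by simp
  next
    case False
    have "degree r \<le> degree (monom (1::complex) (N - 1 - k)) + degree B"
      unfolding r_def using False by (simp add: degree_mult_le)
    also have "\<dots> \<le> (N - 1 - k) + n" unfolding n_def using degree_monom_le by (intro add_mono) auto
    finally show ?thesis using False k' unfolding N_def by simp
  qed
  have "(\<Sum>j<N. sylvester_mat A B $$ (k,j) * z ^ (N - 1 - j)) =
        (\<Sum>j<N. (\<lambda>i. coeff r i * z ^ i) (N - Suc j))"
    using e by (intro sum.cong) auto
  also have "\<dots> = (\<Sum>i<N. coeff r i * z ^ i)" by (rule sum.nat_diff_reindex)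
  also have "\<dots> = poly r z" using poly_sum_lt[OF dr] by simp
  also have "\<dots> = (if k < n then z ^ (n - 1 - k) * poly A z else z ^ (N - 1 - k) * poly B z)"
    unfolding r_def by (simp add: poly_monom)
  finally show ?thesis unfolding N_def m_def n_def .
qed

context vabs begin

lemma intpoly_monom1: "intpoly (monom 1 e)"
  unfolding intpoly_def by (simp add: coeff_monom)

lemma det_int:
  assumes M: "M \<in> carrier_mat n n"
    and e: "\<And>i j. i < n \<Longrightarrow> j < n \<Longrightarrow> algebraic (M $$ (i,j)) \<and> f (M $$ (i,j)) \<le> 1"
  shows "algebraic (det M) \<and> f (det M) \<le> 1"
proof -
  have t: "algebraic (signof q * (\<Prod>i = 0..<n. M $$ (i, q i))) \<and> f (signof q * (\<Prod>i = 0..<n. M $$ (i, q i))) \<le> 1"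
    if q: "q permutes {0..<n}" for q
  proof -
    have qi: "q i < n" if "i < n" for i using permutes_in_image[OF q] that by auto
    have ap: "algebraic (\<Prod>i = 0..<n. M $$ (i, q i))" using e qi by (intro algebraic_prod) auto
    have fp: "f (\<Prod>i = 0..<n. M $$ (i, q i)) = (\<Prod>i = 0..<n. f (M $$ (i, q i)))"
      using e qi by (intro f_prod) auto
    have pl: "(\<Prod>i = 0..<n. f (M $$ (i, q i))) \<le> 1" using e qi by (intro prod_le_1) (auto intro: f_nonneg)
    have s: "signof q = (1::complex) \<or> signof q = (-1::complex)" using signof_pm_one[of q] by auto
    have as: "algebraic (signof q :: complex)" using s algebraic_of_int[of "-1"] by auto
    have fs: "f (signof q) = 1" using s by auto
    show ?thesis using f_mult[OF as ap] algebraic_add_mult(2)[OF as ap] fs fp pl by simp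
  qed
  show ?thesis unfolding det_def'[OF M] using t by (auto intro: algebraic_sum f_sum_um)
qed

lemma resultant_good:
  assumes A: "intpoly A" and B: "intpoly B" and res: "f (resultant A B) = 1"
    and lA: "f (lead_coeff A) = 1"
    and z: "algebraic z" and fz: "f z \<le> 1"
  shows "max (f (poly A z)) (f (poly B z)) = 1"
proof -
  have le: "max (f (poly A z)) (f (poly B z)) \<le> 1" using poly_le1[OF A z fz] poly_le1[OF B z fz] by simp
  have ge: "1 \<le> max (f (poly A z)) (f (poly B z))"
  proof (cases "degree A = 0")
    case True
    then have "poly A z = lead_coeff A" by (metis degree_0_id poly_const_conv)
    then show ?thesis using lA by simp
  next
    case False
    define N where "N = degree A + degree B"
    define S where "S = sylvester_mat A B"
    define c where "c = max (f (poly A z)) (f (poly B z))"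
    have c0: "c \<ge> 0" unfolding c_def using f_nonneg[OF intpoly_alg[OF A z]] by simp
    have N0: "N > 0" using False unfolding N_def by simp
    have SC: "S \<in> carrier_mat N N" unfolding S_def N_def by (rule sylvester_carrier_mat)
    have rS: "resultant A B = det S" unfolding S_def resultant_def ..
    define P where "P k = (\<Sum>j<N. S $$ (k,j) * z ^ (N - 1 - j))" for k
    have se: "algebraic (S $$ (i,j)) \<and> f (S $$ (i,j)) \<le> 1" if "i < N" "j < N" for i j
    proof -
      have "S $$ (i,j) = (if i < degree B then coeff (monom 1 (degree B - i) * A) (N-j)
        else coeff (monom 1 (N - i) * B) (N-j))"
        unfolding S_def N_def using sylvester_index_mat2[of i A B j] that unfolding N_def by simp
      then show ?thesis using intpoly_mult[OF intpoly_monom1 A] intpoly_mult[OF intpoly_monom1 B]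
        by (auto intro: intpolyD)
    qed
    have PA: "algebraic (P k)" if "k < N" for k
      unfolding P_def using se that z by (auto intro!: algebraic_sum algebraic_add_mult algebraic_power)
    have Pf: "f (P k) \<le> c" if k: "k < N" for k
    proof -
      have Pk: "P k = (if k < degree B then z ^ (degree B - 1 - k) * poly A z
        else z ^ (degree A + degree B - 1 - k) * poly B z)"
        unfolding P_def S_def N_def by (rule sylv_row) (use k N_def in simp)
      have g: "f (z ^ e * w) \<le> f w" if "algebraic w" for e w
      proof -
        have "f (z ^ e * w) = f z ^ e * f w" using that z by (simp add: f_mult f_pow algebraic_power)
        also have "\<dots> \<le> 1 * f w" using fz z that
          by (intro mult_right_mono power_le_one f_nonneg) auto
        finally show ?thesis by simp
      qed
      have ga: "f (z ^ e * poly A z) \<le> c" for e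
        using g[OF intpoly_alg[OF A z], of e] unfolding c_def by (meson max.cobounded1 order_trans)
      have gb: "f (z ^ e * poly B z) \<le> c" for e
        using g[OF intpoly_alg[OF B z], of e] unfolding c_def by (meson max.cobounded2 order_trans)
      show ?thesis unfolding Pk using ga gb by simp
    qed
    define adj where "adj = adj_mat S"
    have adjC: "adj \<in> carrier_mat N N" unfolding adj_def using adj_mat(1)[OF SC] .
    have adjS: "adj * S = det S \<cdot>\<^sub>m 1\<^sub>m N" unfolding adj_def using adj_mat(3)[OF SC] .
    have adjE: "algebraic (adj $$ (N - 1, k)) \<and> f (adj $$ (N - 1, k)) \<le> 1" if k: "k < N" for k
    proof -
      have a: "adj $$ (N - 1, k) = cofactor S k (N - 1)"
        unfolding adj_def adj_mat_def using SC k N0 by simp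
      define D where "D = mat_delete S k (N - 1)"
      have DC: "D \<in> carrier_mat (N - 1) (N - 1)" unfolding D_def using mat_delete_carrier[OF SC] .
      have De: "algebraic (D $$ (i,j)) \<and> f (D $$ (i,j)) \<le> 1" if "i < N - 1" "j < N - 1" for i j
      proof -
        have "D $$ (i,j) = S $$ (if i < k then i else Suc i, if j < N - 1 then j else Suc j)"
          unfolding D_def mat_delete_def using that SC by simp
        then show ?thesis using se that by auto
      qed
      have d: "algebraic (det D) \<and> f (det D) \<le> 1" by (rule det_int[OF DC De])
      have sg: "(-1::complex) ^ (k + (N - 1)) = 1 \<or> (-1::complex) ^ (k + (N - 1)) = -1"
        by (simp add: minus_one_power_iff)
      have as: "algebraic ((-1::complex) ^ (k + (N - 1)))" using sg algebraic_of_int[of "-1"] by auto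
      have fs: "f ((-1::complex) ^ (k + (N - 1))) = 1" using sg by auto
      show ?thesis unfolding a cofactor_def D_def[symmetric]
        using d as fs f_mult[OF as] algebraic_add_mult(2)[OF as] by simp
    qed
    have key: "det S = (\<Sum>k<N. adj $$ (N - 1, k) * P k)"
    proof -
      have ent: "(\<Sum>k<N. adj $$ (N - 1, k) * S $$ (k, j)) = (if N - 1 = j then det S else 0)"
        if j: "j < N" for j
      proof -
        have "(adj * S) $$ (N - 1, j) = (\<Sum>k<N. adj $$ (N - 1, k) * S $$ (k, j))"
          using adjC SC j N0 by (simp add: scalar_prod_def lessThan_atLeast0)
        moreover have "(adj * S) $$ (N - 1, j) = (if N - 1 = j then det S else 0)"
          unfolding adjS using j N0 by simp
        ultimately show ?thesis by simp
      qed
      have "(\<Sum>k<N. adj $$ (N - 1, k) * P k) =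
            (\<Sum>k<N. \<Sum>j<N. adj $$ (N - 1, k) * S $$ (k,j) * z ^ (N - 1 - j))"
        unfolding P_def by (simp add: sum_distrib_left mult.assoc)
      also have "\<dots> = (\<Sum>j<N. \<Sum>k<N. adj $$ (N - 1, k) * S $$ (k,j) * z ^ (N - 1 - j))"
        by (rule sum.swap)
      also have "\<dots> = (\<Sum>j<N. (\<Sum>k<N. adj $$ (N - 1, k) * S $$ (k,j)) * z ^ (N - 1 - j))"
        by (simp add: sum_distrib_right)
      also have "\<dots> = (\<Sum>j<N. (if N - 1 = j then det S else 0) * z ^ (N - 1 - j))"
        using ent by (intro sum.cong) auto
      also have "\<dots> = (\<Sum>j<N. if j = N - 1 then det S * z ^ (N - 1 - j) else 0)"
        by (rule sum.cong) auto
      also have "\<dots> = det S" using N0 by (subst sum.delta) auto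
      finally show ?thesis by simp
    qed
    have "f (det S) \<le> c" unfolding key
    proof (rule f_sum_um[OF _ _ c0])
      fix k assume k: "k \<in> {..<N}"
      show "algebraic (adj $$ (N - 1, k) * P k)" using adjE PA k by (auto intro: algebraic_add_mult)
      have "f (adj $$ (N - 1, k) * P k) = f (adj $$ (N - 1, k)) * f (P k)"
        using adjE PA k by (intro f_mult) auto
      also have "\<dots> \<le> 1 * c" using adjE PA Pf k by (intro mult_mono f_nonneg) auto
      finally show "f (adj $$ (N - 1, k) * P k) \<le> c" by simp
    qed
    then show ?thesis using res rS unfolding c_def by simp
  qed
  show ?thesis using le ge by linarith
qed

end



lemma N1: fixes d a b :: nat assumes "d \<ge> 2" shows "1 + d*(a + b*(d-1)) < d * max (d*a) (d*b+1)"
proof -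
  obtain e where d: "d = Suc (Suc e)" using assms by (metis add_2_eq_Suc le_Suc_ex)
  show ?thesis
  proof (cases "b < a")
    case True
    then obtain t where a: "a = b + 1 + t" by (metis add.commute add_Suc_right less_imp_Suc_add plus_1_eq_Suc)
    have m: "max (d*a) (d*b+1) = d*a" unfolding d a by (simp add: algebra_simps)
    show ?thesis unfolding m unfolding d a by (simp add: algebra_simps)
  next
    case False
    then obtain t where b: "b = a + t" using le_Suc_ex not_less by blast
    have m: "max (d*a) (d*b+1) = d*b+1" unfolding d b by (simp add: algebra_simps)
    show ?thesis unfolding m unfolding d b by (simp add: algebra_simps)
  qed
qed

lemma N2: fixes d a b :: nat assumes "d \<ge> 2" shows "1 + d*(a + b*(d-1)) < d * max (d - 1 + d*a) (d*b)"
proof -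
  obtain e where d: "d = Suc (Suc e)" using assms by (metis add_2_eq_Suc le_Suc_ex)
  show ?thesis
  proof (cases "a < b")
    case True
    then obtain t where b: "b = a + 1 + t" by (metis add.commute add_Suc_right less_imp_Suc_add plus_1_eq_Suc)
    have m: "max (d - 1 + d*a) (d*b) = d*b" unfolding d b by (simp add: algebra_simps)
    show ?thesis unfolding m unfolding d b by (simp add: algebra_simps)
  next
    case False
    then obtain t where a: "a = b + t" using le_Suc_ex not_less by blast
    have m: "max (d - 1 + d*a) (d*b) = d - 1 + d*a" unfolding d a by (simp add: algebra_simps)
    show ?thesis unfolding m unfolding d a by (simp add: algebra_simps)
  qed
qed

lemma D1: fixes d a b :: nat assumes "d \<ge> 2" shows "d*a \<noteq> d*b+1"
proof
  assume "d*a = d*b+1"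
  then have "d dvd d*b + 1" by (metis dvd_triv_left)
  then have "d dvd 1" by (metis dvd_add_right_iff dvd_triv_left)
  then show False using assms by simp
qed

lemma D2: fixes d a b :: nat assumes "d \<ge> 2" shows "d - 1 + d*a \<noteq> d*b"
proof
  assume "d - 1 + d*a = d*b"
  then have "d dvd (d - 1) + d*a" by (metis dvd_triv_left)
  then have "d dvd d - 1" by (simp add: dvd_add_left_iff)
  then have "d \<le> d - 1" using assms by (intro dvd_imp_le) auto
  then show False using assms by simp
qed

lemma ineq_a:
  fixes l a b :: real and d :: nat
  assumes d: "d \<ge> 2" and l: "1 < l" and a: "0 \<le> a" and b: "0 \<le> b" and h: "l * b ^ d < a ^ d"
  shows "l * (a * b ^ (d - 1)) ^ d < (a ^ d) ^ d"
proof -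
  have "0 \<le> l * b ^ d" using l b by simp
  then have ad: "a ^ d > 0" using h by linarith
  have e1: "(a * b ^ (d - 1)) ^ d = a ^ d * (b ^ d) ^ (d - 1)"
    by (simp add: power_mult_distrib power_mult[symmetric] mult.commute)
  have e2: "(a ^ d) ^ d = a ^ d * (a ^ d) ^ (d - 1)"
    using d by (metis Suc_diff_1 less_le_trans pos2 power_Suc)
  have "l * (b ^ d) ^ (d - 1) \<le> l ^ (d - 1) * (b ^ d) ^ (d - 1)"
  proof (rule mult_right_mono)
    have "l ^ 1 \<le> l ^ (d - 1)" by (rule power_increasing) (use l d in auto)
    then show "l \<le> l ^ (d - 1)" by simp
  qed (use b in simp)
  also have "\<dots> = (l * b ^ d) ^ (d - 1)" by (simp add: power_mult_distrib)
  also have "\<dots> < (a ^ d) ^ (d - 1)"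
    using h l b d by (intro power_strict_mono) auto
  finally have "l * (b ^ d) ^ (d - 1) < (a ^ d) ^ (d - 1)" .
  then have "a ^ d * (l * (b ^ d) ^ (d - 1)) < a ^ d * (a ^ d) ^ (d - 1)"
    using ad by simp
  then show ?thesis unfolding e1 e2 by (simp add: algebra_simps)
qed

context vabs begin

lemma sum_pow_dom:
  assumes u: "algebraic u" and v: "algebraic v" and l: "1 < L"
    and fu: "f u = L ^ i" and fv: "f v = L ^ j" and ij: "i \<noteq> j"
  shows "f (u + v) = L ^ max i j"
proof (cases "i < j")
  case True
  then have "f u < f v" using fu fv l by (simp add: power_strict_increasing)
  then have "f (v + u) = f v" by (rule f_um_eq[OF v u])
  then show ?thesis using True fv by (simp add: add.commute max_def)
next
  case False
  then have "j < i" using ij by simp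
  then have "f v < f u" using fu fv l by (simp add: power_strict_increasing)
  then have "f (u + v) = f u" by (rule f_um_eq[OF u v])
  then show ?thesis using False fu by (simp add: max_def)
qed

lemma step_a:
  assumes d: "d \<ge> 2" and x: "algebraic x" and y: "algebraic y" and lam: "algebraic lam"
    and l: "1 < f lam" and h: "f lam * f y ^ d < f x ^ d"
  shows "f (x ^ d + lam * y ^ d) = f x ^ d" "f (x * y ^ (d - 1)) = f x * f y ^ (d - 1)"
    "f y < f x"
proof -
  have ly: "algebraic (lam * y ^ d)" using lam y by (intro algebraic_add_mult algebraic_power)
  have "f (lam * y ^ d) = f lam * f y ^ d" using lam y by (simp add: f_mult f_pow algebraic_power)
  also have "\<dots> < f (x ^ d)" using h x by (simp add: f_pow)
  finally show "f (x ^ d + lam * y ^ d) = f x ^ d"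
    using f_um_eq[OF algebraic_power[OF x] ly] x by (simp add: f_pow)
  show "f (x * y ^ (d - 1)) = f x * f y ^ (d - 1)" using x y by (simp add: f_mult f_pow algebraic_power)
  have "f y ^ d \<le> f lam * f y ^ d" using l f_nonneg[OF y] by (simp add: mult_le_cancel_right1)
  then have "f y ^ d < f x ^ d" using h by simp
  then show "f y < f x" using f_nonneg[OF x] by (rule power_less_imp_less_base)
qed

lemma step_b:
  assumes d: "d \<ge> 2" and x: "algebraic x" and y: "algebraic y" and lam: "algebraic lam"
    and l: "f lam \<le> 1" and fx: "f x \<le> 1" and fy: "f y \<le> 1" and m: "max (f x) (f y) = 1"
    and c: "f lam < 1 \<Longrightarrow> f x = 1"
  shows "max (f (x ^ d + lam * y ^ d)) (f (x * y ^ (d - 1))) = 1"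
proof -
  have xd: "algebraic (x ^ d)" using x by (rule algebraic_power)
  have ly: "algebraic (lam * y ^ d)" using lam y by (intro algebraic_add_mult algebraic_power)
  have fxd: "f (x ^ d) = f x ^ d" using x by (rule f_pow)
  have fly: "f (lam * y ^ d) = f lam * f y ^ d" using lam y by (simp add: f_mult f_pow algebraic_power)
  have fxy: "f (x * y ^ (d - 1)) = f x * f y ^ (d - 1)" using x y by (simp add: f_mult f_pow algebraic_power)
  have n: "0 \<le> f x" "0 \<le> f y" "0 \<le> f lam" using f_nonneg x y lam by auto
  have le1: "f (x ^ d + lam * y ^ d) \<le> 1"
  proof -
    have "f (x ^ d + lam * y ^ d) \<le> max (f (x ^ d)) (f (lam * y ^ d))" by (rule f_um[OF xd ly])
    moreover have "f (x ^ d) \<le> 1" unfolding fxd using fx n by (simp add: power_le_one)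
    moreover have "f (lam * y ^ d) \<le> 1" unfolding fly using l fy n
      by (intro mult_le_one power_le_one) auto
    ultimately show ?thesis by simp
  qed
  have le2: "f (x * y ^ (d - 1)) \<le> 1" unfolding fxy using fx fy n
    by (intro mult_le_one power_le_one) auto
  have ge: "1 \<le> max (f (x ^ d + lam * y ^ d)) (f (x * y ^ (d - 1)))"
  proof (cases "f x = 1")
    case True
    show ?thesis
    proof (cases "f y = 1")
      case True
      then show ?thesis using \<open>f x = 1\<close> fxy by simp
    next
      case False
      then have "f y < 1" using fy by simp
      then have "f y ^ d < 1" using n d by (simp add: power_less_one_iff)
      moreover have "f lam * f y ^ d \<le> 1 * f y ^ d" using l n by (intro mult_right_mono) auto
      ultimately have "f (lam * y ^ d) < f (x ^ d)" unfolding fly fxd using True by simp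
      then have "f (x ^ d + lam * y ^ d) = f (x ^ d)" by (rule f_um_eq[OF xd ly])
      then show ?thesis using fxd True by simp
    qed
  next
    case False
    then have fx1: "f x < 1" using fx by simp
    then have fy1: "f y = 1" using m by (simp add: max_def split: if_splits)
    have l1: "f lam = 1" using c False l by fastforce
    have "f x ^ d < 1" using fx1 n d by (simp add: power_less_one_iff)
    then have "f (x ^ d) < f (lam * y ^ d)" unfolding fly fxd using l1 fy1 by simp
    then have "f (lam * y ^ d + x ^ d) = f (lam * y ^ d)" by (rule f_um_eq[OF ly xd])
    then show ?thesis using fly l1 fy1 by (simp add: add.commute)
  qed
  show ?thesis using le1 le2 ge by linarith
qed

end

locale mainctx = vabs +
  fixes d :: nat and A B :: "complex poly" and lam :: complex
  assumes d2: "d \<ge> 2" and A0: "A \<noteq> 0" and B0: "B \<noteq> 0"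
    and iA: "intpoly A" and iB: "intpoly B" and res: "f (resultant A B) = 1"
    and lA: "f (lead_coeff A) = 1" and lB: "f (lead_coeff B) = 1"
    and cA: "coeff A 0 \<noteq> 0 \<Longrightarrow> f (coeff A 0) = 1"
    and lam: "algebraic lam"
begin

abbreviation X where "X n \<equiv> fst (AB_seq d A B n)"
abbreviation Y where "Y n \<equiv> snd (AB_seq d A B n)"
abbreviation L where "L \<equiv> f lam"
definition M where "M n = max (f (poly (X n) lam)) (f (poly (Y n) lam))"

definition Inv where "Inv n \<longleftrightarrow> intpoly (X n) \<and> intpoly (Y n) \<and>
  (if 1 < L then L * f (poly (Y n) lam) ^ d < f (poly (X n) lam) ^ d
   else f (coeff (X n) 0) = 1 \<and> M n = 1)"

lemma AB_Suc:
  assumes "n \<ge> 1"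
  shows "X (Suc n) = X n ^ d + [:0, 1:] * Y n ^ d" "Y (Suc n) = X n * Y n ^ (d - 1)"
proof -
  obtain m where n: "n = Suc m" using assms by (metis Suc_le_D One_nat_def)
  show "X (Suc n) = X n ^ d + [:0, 1:] * Y n ^ d" "Y (Suc n) = X n * Y n ^ (d - 1)"
    unfolding n by (cases "AB_seq d A B (Suc m)"; simp)+
qed

lemma Inv_step:
  assumes n: "n \<ge> 1" and I: "Inv n"
  shows "Inv (Suc n) \<and> M (Suc n) = M n ^ d"
proof -
  have iX: "intpoly (X n)" and iY: "intpoly (Y n)" using I unfolding Inv_def by auto
  define x where "x = poly (X n) lam"
  define y where "y = poly (Y n) lam"
  have x: "algebraic x" unfolding x_def by (rule intpoly_alg[OF iX lam])
  have y: "algebraic y" unfolding y_def by (rule intpoly_alg[OF iY lam])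
  have px: "poly (X (Suc n)) lam = x ^ d + lam * y ^ d" unfolding AB_Suc[OF n] x_def y_def by simp
  have py: "poly (Y (Suc n)) lam = x * y ^ (d - 1)" unfolding AB_Suc[OF n] x_def y_def by simp
  have iX': "intpoly (X (Suc n))" unfolding AB_Suc[OF n]
    by (intro intpoly_add intpoly_mult intpoly_pow iX iY intpoly_x)
  have iY': "intpoly (Y (Suc n))" unfolding AB_Suc[OF n]
    by (intro intpoly_mult intpoly_pow iX iY)
  have Mn: "M n = max (f x) (f y)" unfolding M_def x_def y_def ..
  have MS: "M (Suc n) = max (f (x ^ d + lam * y ^ d)) (f (x * y ^ (d - 1)))" unfolding M_def px py ..
  show ?thesis
  proof (cases "1 < L")
    case True
    have h: "L * f y ^ d < f x ^ d" using I True unfolding Inv_def x_def y_def by simp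
    note sa = step_a[OF d2 x y lam True h]
    have nx: "0 \<le> f x" "0 \<le> f y" using f_nonneg x y by auto
    have h': "L * (f x * f y ^ (d - 1)) ^ d < (f x ^ d) ^ d"
      by (rule ineq_a[OF d2 True nx h])
    have "f y ^ (d - 1) \<le> f x ^ (d - 1)" using sa(3) nx by (intro power_mono) auto
    then have "f x * f y ^ (d - 1) \<le> f x * f x ^ (d - 1)" using nx by (intro mult_left_mono) auto
    also have "\<dots> = f x ^ d" using d2 by (metis Suc_diff_1 less_le_trans pos2 power_Suc)
    finally have "M (Suc n) = f x ^ d" unfolding MS sa(1) sa(2) by simp
    moreover have "M n = f x" unfolding Mn using sa(3) by simp
    moreover have "Inv (Suc n)" unfolding Inv_def using iX' iY' True h' px py sa by simp
    ultimately show ?thesis by simp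
  next
    case False
    then have l1: "L \<le> 1" by simp
    have c0: "f (coeff (X n) 0) = 1" and m1: "M n = 1" using I False unfolding Inv_def by auto
    have fx: "f x \<le> 1" unfolding x_def by (rule poly_le1[OF iX lam l1])
    have fy: "f y \<le> 1" unfolding y_def by (rule poly_le1[OF iY lam l1])
    have c: "f x = 1" if "L < 1" unfolding x_def by (rule poly_const[OF iX lam that c0])
    have MS1: "M (Suc n) = 1" unfolding MS by (rule step_b[OF d2 x y lam l1 fx fy m1[unfolded Mn] c])
    have "coeff (X (Suc n)) 0 = coeff (X n) 0 ^ d"
      unfolding AB_Suc[OF n] by (simp add: poly_0_coeff_0[symmetric])
    then have "f (coeff (X (Suc n)) 0) = 1" using c0 intpolyD[OF iX] by (simp add: f_pow)
    then have "Inv (Suc n)" unfolding Inv_def using iX' iY' False MS1 by simp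
    then show ?thesis using MS1 m1 by simp
  qed
qed

end



lemma pw1: "(L::real) * (L ^ b) ^ d = L ^ (d * b + 1)"
  by (simp add: power_mult[symmetric] mult.commute)
lemma pw2: "((L::real) ^ b) ^ d = L ^ (d * b)"
  by (simp add: power_mult[symmetric] mult.commute)
lemma pw3: "(L::real) ^ a * (L ^ b) ^ (d - 1) = L ^ (a + b * (d - 1))"
  by (simp add: power_mult[symmetric] power_add)
lemma pw4: "(L::real) ^ (d - 1) * (L ^ b) ^ d = L ^ (d - 1 + d * b)"
  by (simp add: power_mult[symmetric] power_add mult.commute)
lemma pw5: "(L::real) * (L ^ e) ^ d = L ^ (1 + d * e)"
  by (simp add: power_mult[symmetric] mult.commute)
lemma pw6: "(L::real) ^ (d * m) = (L ^ m) ^ d"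
  by (simp add: power_mult[symmetric] mult.commute)

context mainctx begin

lemma AB_1_cases:
  shows "poly A 0 \<noteq> 0 \<Longrightarrow> X 1 = A ^ d + [:0, 1:] * B ^ d \<and> Y 1 = A * B ^ (d - 1)"
    and "poly A 0 = 0 \<Longrightarrow> X 1 = (A ^ d + [:0, 1:] * B ^ d) div [:0, 1:] \<and> Y 1 = (A * B ^ (d - 1)) div [:0, 1:]"
  by (simp_all add: One_nat_def)

lemma Inv1: "Inv 1 \<and> M 1 > 0"
proof -
  define a where "a = poly A lam"
  define b where "b = poly B lam"
  have aa: "algebraic a" unfolding a_def by (rule intpoly_alg[OF iA lam])
  have ab: "algebraic b" unfolding b_def by (rule intpoly_alg[OF iB lam])
  have nL: "0 \<le> L" using f_nonneg[OF lam] .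
  have d1: "d \<ge> 1" using d2 by simp
  show ?thesis
  proof (cases "poly A 0 \<noteq> 0")
    case True
    have X1: "X 1 = A ^ d + [:0, 1:] * B ^ d" and Y1: "Y 1 = A * B ^ (d - 1)"
      using AB_1_cases(1)[OF True] by auto
    have ca: "f (coeff A 0) = 1" using True cA by (simp add: poly_0_coeff_0)
    have iX: "intpoly (X 1)" unfolding X1 by (intro intpoly_add intpoly_mult intpoly_pow iA iB intpoly_x)
    have iY: "intpoly (Y 1)" unfolding Y1 by (intro intpoly_mult intpoly_pow iA iB)
    have px: "poly (X 1) lam = a ^ d + lam * b ^ d" unfolding X1 a_def b_def by simp
    have py: "poly (Y 1) lam = a * b ^ (d - 1)" unfolding Y1 a_def b_def by simp
    show ?thesis
    proof (cases "1 < L")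
      case True
      have fa: "f a = L ^ degree A" unfolding a_def by (rule poly_lead[OF iA lam True lA])
      have fb: "f b = L ^ degree B" unfolding b_def by (rule poly_lead[OF iB lam True lB])
      have f1: "f (a ^ d) = L ^ (d * degree A)"
      proof -
        have "f (a ^ d) = f a ^ d" by (rule f_pow[OF aa])
        also have "\<dots> = L ^ (d * degree A)" unfolding fa by (rule pw2)
        finally show ?thesis .
      qed
      have f2: "f (lam * b ^ d) = L ^ (d * degree B + 1)"
      proof -
        have "f (lam * b ^ d) = f lam * f (b ^ d)" by (rule f_mult[OF lam algebraic_power[OF ab]])
        also have "\<dots> = L * (L ^ degree B) ^ d" unfolding f_pow[OF ab] fb ..
        also have "\<dots> = L ^ (d * degree B + 1)" by (rule pw1)
        finally show ?thesis .
      qed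
      have fx: "f (a ^ d + lam * b ^ d) = L ^ max (d * degree A) (d * degree B + 1)"
        by (rule sum_pow_dom[OF algebraic_power[OF aa] algebraic_add_mult(2)[OF lam algebraic_power[OF ab]] True f1 f2 D1[OF d2]])
      have fy: "f (a * b ^ (d - 1)) = L ^ (degree A + degree B * (d - 1))"
      proof -
        have "f (a * b ^ (d - 1)) = f a * f (b ^ (d - 1))" by (rule f_mult[OF aa algebraic_power[OF ab]])
        also have "\<dots> = L ^ degree A * (L ^ degree B) ^ (d - 1)" unfolding f_pow[OF ab] fa fb ..
        also have "\<dots> = L ^ (degree A + degree B * (d - 1))" by (rule pw3)
        finally show ?thesis .
      qed
      have "L * (L ^ (degree A + degree B * (d - 1))) ^ d = L ^ (1 + d * (degree A + degree B * (d - 1)))"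
        by (rule pw5)
      also have "\<dots> < L ^ (d * max (d * degree A) (d * degree B + 1))"
        using True N1[OF d2] by (intro power_strict_increasing) auto
      also have "\<dots> = (L ^ max (d * degree A) (d * degree B + 1)) ^ d"
        by (rule pw6)
      finally have I: "L * f (poly (Y 1) lam) ^ d < f (poly (X 1) lam) ^ d" unfolding px py fx fy .
      have "M 1 \<ge> f (poly (X 1) lam)" unfolding M_def by simp
      moreover have "f (poly (X 1) lam) > 0" unfolding px fx using True by simp
      ultimately have "M 1 > 0" by simp
      then show ?thesis unfolding Inv_def using iX iY I True by simp
    next
      case False
      then have l1: "L \<le> 1" by simp
      have mab: "max (f a) (f b) = 1" unfolding a_def b_def by (rule resultant_good[OF iA iB res lA lam l1])
      have fa: "f a \<le> 1" unfolding a_def by (rule poly_le1[OF iA lam l1])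
      have fb: "f b \<le> 1" unfolding b_def by (rule poly_le1[OF iB lam l1])
      have c: "f a = 1" if "L < 1" unfolding a_def by (rule poly_const[OF iA lam that ca])
      have M1: "M 1 = 1" unfolding M_def px py by (rule step_b[OF d2 aa ab lam l1 fa fb mab c])
      have "coeff (X 1) 0 = coeff A 0 ^ d" unfolding X1 by (simp add: poly_0_coeff_0[symmetric])
      then have "f (coeff (X 1) 0) = 1" using ca intpolyD[OF iA] by (simp add: f_pow)
      then show ?thesis unfolding Inv_def using iX iY False M1 by simp
    qed
  next
    case False
    then have A00: "poly A 0 = 0" by simp
    have X1': "X 1 = (A ^ d + [:0, 1:] * B ^ d) div [:0, 1:]" and Y1': "Y 1 = (A * B ^ (d - 1)) div [:0, 1:]"
      using AB_1_cases(2)[OF A00] by auto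
    obtain c A' where AA: "A = pCons c A'" by (rule pCons_cases)
    have c0: "c = 0" using A00 AA by simp
    have AA': "A = [:0, 1:] * A'" using AA c0 by simp
    have A'0: "A' \<noteq> 0" using A0 AA' by auto
    have iA': "intpoly A'" using iA AA intpoly_pCons by simp
    have lA': "f (lead_coeff A') = 1" using lA AA c0 A'0 by simp
    define xp :: "complex poly" where "xp = [:0, 1:]"
    have xp0: "xp \<noteq> 0" unfolding xp_def by simp
    have "A ^ d + xp * B ^ d = xp * (xp ^ (d - 1) * A' ^ d + B ^ d)"
    proof -
      have "A ^ d = xp ^ d * A' ^ d" unfolding AA' xp_def by (rule power_mult_distrib)
      also have "\<dots> = xp * (xp ^ (d - 1) * A' ^ d)" using d1
        by (cases d) (auto simp: mult.assoc)
      finally show ?thesis by (simp add: algebra_simps)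
    qed
    then have X1: "X 1 = xp ^ (d - 1) * A' ^ d + B ^ d" unfolding X1' xp_def[symmetric]
      using xp0 by simp
    have e: "A * B ^ (d - 1) = xp * (A' * B ^ (d - 1))" unfolding AA' xp_def by simp
    have "Y 1 = (xp * (A' * B ^ (d - 1))) div xp" unfolding Y1' xp_def[symmetric] e ..
    also have "\<dots> = A' * B ^ (d - 1)" using xp0 by (rule nonzero_mult_div_cancel_left)
    finally have Y1: "Y 1 = A' * B ^ (d - 1)" .
    have ixp: "intpoly xp" unfolding xp_def by (rule intpoly_x)
    have iX: "intpoly (X 1)" unfolding X1 by (intro intpoly_add intpoly_mult intpoly_pow iA' iB ixp)
    have iY: "intpoly (Y 1)" unfolding Y1 by (intro intpoly_mult intpoly_pow iA' iB)
    define a' where "a' = poly A' lam"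
    have aa': "algebraic a'" unfolding a'_def by (rule intpoly_alg[OF iA' lam])
    have px: "poly (X 1) lam = lam ^ (d - 1) * a' ^ d + b ^ d" unfolding X1 a'_def b_def xp_def by simp
    have py: "poly (Y 1) lam = a' * b ^ (d - 1)" unfolding Y1 a'_def b_def by simp
    have ta: "algebraic (lam ^ (d - 1) * a' ^ d)" using lam aa' by (intro algebraic_add_mult algebraic_power)
    have ft: "f (lam ^ (d - 1) * a' ^ d) = L ^ (d - 1) * f a' ^ d"
      using lam aa' by (simp add: f_mult f_pow algebraic_power)
    show ?thesis
    proof (cases "1 < L")
      case True
      have fa: "f a' = L ^ degree A'" unfolding a'_def by (rule poly_lead[OF iA' lam True lA'])
      have fb: "f b = L ^ degree B" unfolding b_def by (rule poly_lead[OF iB lam True lB])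
      have f1: "f (lam ^ (d - 1) * a' ^ d) = L ^ (d - 1 + d * degree A')"
        unfolding ft fa by (rule pw4)
      have f2: "f (b ^ d) = L ^ (d * degree B)" unfolding f_pow[OF ab] fb by (rule pw2)
      have fx: "f (lam ^ (d - 1) * a' ^ d + b ^ d) = L ^ max (d - 1 + d * degree A') (d * degree B)"
        by (rule sum_pow_dom[OF ta algebraic_power[OF ab] True f1 f2 D2[OF d2]])
      have fy: "f (a' * b ^ (d - 1)) = L ^ (degree A' + degree B * (d - 1))"
      proof -
        have "f (a' * b ^ (d - 1)) = f a' * f (b ^ (d - 1))" by (rule f_mult[OF aa' algebraic_power[OF ab]])
        also have "\<dots> = L ^ degree A' * (L ^ degree B) ^ (d - 1)" unfolding f_pow[OF ab] fa fb ..
        also have "\<dots> = L ^ (degree A' + degree B * (d - 1))" by (rule pw3)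
        finally show ?thesis .
      qed
      have "L * (L ^ (degree A' + degree B * (d - 1))) ^ d = L ^ (1 + d * (degree A' + degree B * (d - 1)))"
        by (rule pw5)
      also have "\<dots> < L ^ (d * max (d - 1 + d * degree A') (d * degree B))"
        using True N2[OF d2] by (intro power_strict_increasing) auto
      also have "\<dots> = (L ^ max (d - 1 + d * degree A') (d * degree B)) ^ d"
        by (rule pw6)
      finally have I: "L * f (poly (Y 1) lam) ^ d < f (poly (X 1) lam) ^ d" unfolding px py fx fy .
      have "M 1 \<ge> f (poly (X 1) lam)" unfolding M_def by simp
      moreover have "f (poly (X 1) lam) > 0" unfolding px fx using True by simp
      ultimately have "M 1 > 0" by simp
      then show ?thesis unfolding Inv_def using iX iY I True by simp
    next
      case False
      then have l1: "L \<le> 1" by simp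
      have mab: "max (f a) (f b) = 1" unfolding a_def b_def by (rule resultant_good[OF iA iB res lA lam l1])
      have fa': "f a' \<le> 1" unfolding a'_def by (rule poly_le1[OF iA' lam l1])
      have fb: "f b \<le> 1" unfolding b_def by (rule poly_le1[OF iB lam l1])
      have na: "0 \<le> f a'" "0 \<le> f b" using f_nonneg aa' ab by auto
      have aeq: "a = lam * a'" unfolding a_def a'_def AA' by simp
      have faeq: "f a = L * f a'" unfolding aeq using lam aa' by (rule f_mult)
      have bd: "algebraic (b ^ d)" using ab by (rule algebraic_power)
      have fbd: "f (b ^ d) = f b ^ d" using ab by (rule f_pow)
      have fx1: "f (poly (X 1) lam) \<le> 1" by (rule poly_le1[OF iX lam l1])
      have fy1: "f (poly (Y 1) lam) \<le> 1" by (rule poly_le1[OF iY lam l1])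
      have fyeq: "f (poly (Y 1) lam) = f a' * f b ^ (d - 1)" unfolding py using aa' ab
        by (simp add: f_mult f_pow algebraic_power)
      have tle: "L ^ (d - 1) * f a' ^ d \<le> f a'"
      proof -
        have "L ^ (d - 1) * f a' ^ d \<le> 1 * f a' ^ d" using l1 nL na by (intro mult_right_mono power_le_one) auto
        also have "\<dots> = f a' ^ d" by simp
        also have "\<dots> \<le> f a' ^ 1" by (rule power_decreasing) (use fa' na d1 in auto)
        finally show ?thesis by simp
      qed
      have ge: "1 \<le> max (f (poly (X 1) lam)) (f (poly (Y 1) lam))"
      proof (cases "f b = 1")
        case True
        show ?thesis
        proof (cases "L ^ (d - 1) * f a' ^ d < 1")
          case True
          then have "f (lam ^ (d - 1) * a' ^ d) < f (b ^ d)" unfolding ft fbd using \<open>f b = 1\<close> by simp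
          then have "f (b ^ d + lam ^ (d - 1) * a' ^ d) = f (b ^ d)" by (rule f_um_eq[OF bd ta])
          then show ?thesis unfolding px using \<open>f b = 1\<close> fbd by (simp add: add.commute)
        next
          case False
          then have "f a' \<ge> 1" using tle by simp
          then have "f a' = 1" using fa' by simp
          then show ?thesis unfolding fyeq using \<open>f b = 1\<close> by simp
        qed
      next
        case False
        then have "f b < 1" using fb by simp
        then have fa1: "f a = 1" using mab by (simp add: max_def split: if_splits)
        have "L \<ge> 1"
        proof -
          have "L * f a' \<le> L * 1" using fa' nL by (intro mult_left_mono) auto
          then show ?thesis using fa1 faeq by simp
        qed
        then have L1: "L = 1" using l1 by simp
        then have a1: "f a' = 1" using fa1 faeq by simp
        have "f (b ^ d) < f (lam ^ (d - 1) * a' ^ d)" unfolding ft fbd using L1 a1 \<open>f b < 1\<close> na d1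
          by (simp add: power_less_one_iff)
        then have "f (lam ^ (d - 1) * a' ^ d + b ^ d) = f (lam ^ (d - 1) * a' ^ d)" by (rule f_um_eq[OF ta bd])
        then show ?thesis unfolding px ft using L1 a1 by simp
      qed
      have M1: "M 1 = 1" unfolding M_def using ge fx1 fy1 by linarith
      have mab0: "max (f (poly A 0)) (f (poly B 0)) = 1"
        by (rule resultant_good[OF iA iB res lA]) simp_all
      then have fB0: "f (coeff B 0) = 1" using A00 by (simp add: poly_0_coeff_0)
      have "coeff (X 1) 0 = coeff B 0 ^ d" unfolding X1 xp_def using d2
        by (simp add: poly_0_coeff_0[symmetric] zero_power)
      then have "f (coeff (X 1) 0) = 1" using fB0 intpolyD[OF iB] by (simp add: f_pow)
      then show ?thesis unfolding Inv_def using iX iY False M1 by simp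
    qed
  qed
qed

lemma M_pow: "n \<ge> 1 \<Longrightarrow> Inv n \<and> M n = M 1 ^ (d ^ (n - 1))"
proof (induct n rule: dec_induct)
  case base then show ?case using Inv1 by simp
next
  case (step n)
  have "Inv (Suc n) \<and> M (Suc n) = M n ^ d" using Inv_step step by blast
  moreover have "M n ^ d = M 1 ^ (d ^ (Suc n - 1))"
  proof -
    have "d ^ (Suc n - 1) = d ^ (n - 1) * d" using step(1) by (cases n) auto
    then show ?thesis using step(3) by (simp add: power_mult)
  qed
  ultimately show ?case by simp
qed

lemma final: "n \<ge> 1 \<Longrightarrow> ln (M n) / real d ^ n = ln (M 1) / real d"
proof -
  assume n: "n \<ge> 1"
  have M0: "M 1 > 0" using Inv1 by simp
  have "ln (M n) = real (d ^ (n - 1)) * ln (M 1)" using M_pow[OF n] M0 by (simp add: ln_realpow)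
  moreover have "real d ^ n = real d * real d ^ (n - 1)" using n
    by (cases n) auto
  moreover have "real d > 0" using d2 by simp
  ultimately show ?thesis by (simp add: of_nat_power)
qed

end


theorem proposition4p3:
  fixes d p :: nat and K :: "complex set" and A B :: "complex poly"
    and f :: "complex \<Rightarrow> real" and lam :: complex
  assumes "d \<ge> 2"
    and "number_field K"
    and "A \<noteq> 0" and "B \<noteq> 0"
    and "\<forall>i. coeff A i \<in> K" and "\<forall>i. coeff B i \<in> K"
    and "coprime A B"
    and "prime p" and "padic_abs_ext p f"
    and "\<forall>i. v_integer f (coeff A i)" and "\<forall>i. v_integer f (coeff B i)"
    and "v_unit f (resultant A B)"
    and "v_unit f (lead_coeff A)" and "v_unit f (lead_coeff B)"
    and "coeff A 0 \<noteq> 0 \<longrightarrow> v_unit f (coeff A 0)"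
    and "algebraic lam" and "lam \<noteq> 0"
  shows "\<forall>n\<ge>1. ln (M_cnv d A B n f lam) / real d ^ n = ln (M_cnv d A B 1 f lam) / real d"
proof -
  interpret vabs p f using assms(8,9) by unfold_locales
  have algA: "algebraic (coeff A i)" for i using number_field_algebraic[OF assms(2)] assms(5) by blast
  have algB: "algebraic (coeff B i)" for i using number_field_algebraic[OF assms(2)] assms(6) by blast
  have iA: "intpoly A" unfolding intpoly_def using algA assms(10) unfolding v_integer_def by blast
  have iB: "intpoly B" unfolding intpoly_def using algB assms(11) unfolding v_integer_def by blast
  interpret mainctx p f d A B lam
  proof unfold_locales
    show "2 \<le> d" "A \<noteq> 0" "B \<noteq> 0" "intpoly A" "intpoly B" "algebraic lam"
      using assms iA iB by auto
    show "f (resultant A B) = 1" "f (lead_coeff A) = 1" "f (lead_coeff B) = 1"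
      using assms(12,13,14) unfolding v_unit_def by auto
    show "coeff A 0 \<noteq> 0 \<Longrightarrow> f (coeff A 0) = 1" using assms(15) unfolding v_unit_def by auto
  qed
  have MM: "M_cnv d A B n f lam = M n" for n unfolding M_cnv_def M_def ..
  show ?thesis
  proof (intro allI impI)
    fix n :: nat assume n: "1 \<le> n"
    show "ln (M_cnv d A B n f lam) / real d ^ n = ln (M_cnv d A B 1 f lam) / real d"
      unfolding MM using final[OF n] .
  qed
qed

end
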